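(* Let $\gamma_X$ and $\gamma_Y$ be any two dynamic metric spaces. Then \[d_{\mathrm{I}}(\beta_0^{\gamma_X},\beta_0^{\gamma_Y})\le 2\cdot d_{\mathtt{dyn}}(\gamma_X,\gamma_Y).\]
   Context: A dynamic metric space (DMS) is a pair $\gamma_X=(X,d_X(\cdot))$ where $X$ is a nonempty finite set and $d_X(\cdot):\mathbf{R}\times X\times X\to\mathbf{R}_+$ satisfies: each $d_X(t)$ is a pseudometric, some $d_X(t_0)$ is a metric, and $t\mapsto d_X(t)(x,x')$ is continuous for all $x,x'$. $\mathbf{Int}$ is the set of finite closed intervals of $\mathbf{R}$. For $I\in\mathbf{Int}$, $(\bigvee_I d_X)(x,x'):=\min_{s\in I}d_X(s)(x,x')$; for $I=[u,u']$, $I^\varepsilon=[u-\varepsilon,u'+\varepsilon]$, and $[t]^\varepsilon=[t-\varepsilon,t+\varepsilon]$. A tripod between $X$ and $Y$ is a set $Z$ with surjections $\varphi_X:Z\to X$, $\varphi_Y:Z\to Y$; it is an $\varepsilon$-tripod between $\gamma_X,\gamma_Y$ if for all $t\in\mathbf{R}$, $z,z'\in Z$: $(\bigvee_{[t]^\varepsilon}d_X)(\varphi_X(z),\varphi_X(z'))\le d_Y(t)(\varphi_Y(z),\varphi_Y(z'))+2\varepsilon$ and $(\bigvee_{[t]^\varepsilon}d_Y)(\varphi_Y(z),\varphi_Y(z'))\le d_X(t)(\varphi_X(z),\varphi_X(z'))+2\varepsilon$. $d_{\mathtt{dyn}}(\gamma_X,\gamma_Y)$ is the minimum over tripods of the infimum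 of $\varepsilon$ for which the tripod is an $\varepsilon$-tripod ($\infty$ if none). For symmetric $d$ vanishing on the diagonal, $\mathcal{R}_\delta(X,d)$ is the simplicial complex on $X$ with simplices the nonempty $\sigma$ with $d(x,x')\le\delta$ for all $x,x'\in\sigma$. The Betti-0 function $\beta_0^{\gamma_X}:\mathbf{Int}\times\mathbf{R}_+\to\mathbf{Z}_+$ sends $(I,\delta)$ to $\dim\mathrm{H}_0(\mathcal{R}_\delta(X,\bigvee_I d_X))$ (homology over a fixed field). For functions $F,G:\mathbf{Int}\times\mathbf{R}_+\to\mathbf{Z}_+$, $d_{\mathrm{I}}(F,G):=\inf\{\varepsilon\ge0:\forall (I,\delta),\ F(I,\delta)\ge G(I^\varepsilon,\delta+\varepsilon)\text{ and }G(I,\delta)\ge F(I^\varepsilon,\delta+\varepsilon)\}$. *)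

theory Defs
  imports "HOL-Analysis.Analysis" "HOL-Library.Extended_Real"
begin

(* A dynamic metric space on the carrier X (of type 'a), with d :: time => point => point => real *)

definition pseudometric_on :: "'a set \<Rightarrow> ('a \<Rightarrow> 'a \<Rightarrow> real) \<Rightarrow> bool" where
  "pseudometric_on X d \<longleftrightarrow>
     (\<forall>x\<in>X. \<forall>y\<in>X. d x y \<ge> 0) \<and>
     (\<forall>x\<in>X. d x x = 0) \<and>
     (\<forall>x\<in>X. \<forall>y\<in>X. d x y = d y x) \<and>
     (\<forall>x\<in>X. \<forall>y\<in>X. \<forall>z\<in>X. d x z \<le> d x y + d y z)"

definition metric_on :: "'a set \<Rightarrow> ('a \<Rightarrow> 'a \<Rightarrow> real) \<Rightarrow> bool" where
  "metric_on X d \<longleftrightarrow> pseudometric_on X d \<and> (\<forall>x\<in>X. \<forall>y\<in>X. d x y = 0 \<longrightarrow> x = y)"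

definition is_DMS :: "'a set \<Rightarrow> (real \<Rightarrow> 'a \<Rightarrow> 'a \<Rightarrow> real) \<Rightarrow> bool" where
  "is_DMS X d \<longleftrightarrow>
     finite X \<and> X \<noteq> {} \<and>
     (\<forall>t. pseudometric_on X (d t)) \<and>
     (\<exists>t0. metric_on X (d t0)) \<and>
     (\<forall>x\<in>X. \<forall>x'\<in>X. continuous_on UNIV (\<lambda>t. d t x x'))"

(* (\<Or>_I d)(x,x') for I = [u,u'] : minimum over s in I of d(s)(x,x') *)
definition vee :: "real \<Rightarrow> real \<Rightarrow> (real \<Rightarrow> 'a \<Rightarrow> 'a \<Rightarrow> real) \<Rightarrow> 'a \<Rightarrow> 'a \<Rightarrow> real" where
  "vee u u' d x x' = Inf ((\<lambda>s. d s x x') ` {u..u'})"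

(* A tripod is represented by its image Z \<subseteq> X \<times> Y, with phi_X = fst, phi_Y = snd *)
definition is_tripod :: "'a set \<Rightarrow> 'b set \<Rightarrow> ('a \<times> 'b) set \<Rightarrow> bool" where
  "is_tripod X Y Z \<longleftrightarrow> Z \<subseteq> X \<times> Y \<and> fst ` Z = X \<and> snd ` Z = Y"

definition is_eps_tripod ::
  "real \<Rightarrow> 'a set \<Rightarrow> (real \<Rightarrow> 'a \<Rightarrow> 'a \<Rightarrow> real) \<Rightarrow> 'b set \<Rightarrow> (real \<Rightarrow> 'b \<Rightarrow> 'b \<Rightarrow> real)
     \<Rightarrow> ('a \<times> 'b) set \<Rightarrow> bool" where
  "is_eps_tripod \<epsilon> X dX Y dY Z \<longleftrightarrow> is_tripod X Y Z \<and>
     (\<forall>t. \<forall>z\<in>Z. \<forall>z'\<in>Z.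
        vee (t - \<epsilon>) (t + \<epsilon>) dX (fst z) (fst z') \<le> dY t (snd z) (snd z') + 2 * \<epsilon> \<and>
        vee (t - \<epsilon>) (t + \<epsilon>) dY (snd z) (snd z') \<le> dX t (fst z) (fst z') + 2 * \<epsilon>)"

(* d_dyn: infimum over tripods of the infimum of admissible eps (\<infinity> if none) *)
definition d_dyn ::
  "'a set \<Rightarrow> (real \<Rightarrow> 'a \<Rightarrow> 'a \<Rightarrow> real) \<Rightarrow> 'b set \<Rightarrow> (real \<Rightarrow> 'b \<Rightarrow> 'b \<Rightarrow> real) \<Rightarrow> ereal" where
  "d_dyn X dX Y dY =
     (INF Z\<in>{Z. is_tripod X Y Z}. Inf (ereal ` {\<epsilon>. \<epsilon> \<ge> 0 \<and> is_eps_tripod \<epsilon> X dX Y dY Z}))"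

definition rips :: "'a set \<Rightarrow> ('a \<Rightarrow> 'a \<Rightarrow> real) \<Rightarrow> real \<Rightarrow> 'a set set" where
  "rips X d \<delta> = {\<sigma>. \<sigma> \<noteq> {} \<and> \<sigma> \<subseteq> X \<and> (\<forall>x\<in>\<sigma>. \<forall>x'\<in>\<sigma>. d x x' \<le> \<delta>)}"

(* dim H_0 of a simplicial complex K on vertex set X = number of connected components,
   i.e. the number of classes of the equivalence relation generated by "lie in a common simplex" *)
definition betti0_complex :: "'a set \<Rightarrow> 'a set set \<Rightarrow> nat" where
  "betti0_complex X K = card (X // ({(x, y). \<exists>\<sigma>\<in>K. x \<in> \<sigma> \<and> y \<in> \<sigma>}\<^sup>*))"

(* Betti-0 function; the interval I = [u,u'] is encoded by its endpoints (u \<le> u') *)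
definition betti0_fun :: "'a set \<Rightarrow> (real \<Rightarrow> 'a \<Rightarrow> 'a \<Rightarrow> real) \<Rightarrow> real \<Rightarrow> real \<Rightarrow> real \<Rightarrow> nat" where
  "betti0_fun X d u u' \<delta> = betti0_complex X (rips X (vee u u' d) \<delta>)"

definition d_I :: "(real \<Rightarrow> real \<Rightarrow> real \<Rightarrow> nat) \<Rightarrow> (real \<Rightarrow> real \<Rightarrow> real \<Rightarrow> nat) \<Rightarrow> ereal" where
  "d_I F G = Inf (ereal ` {\<epsilon>. \<epsilon> \<ge> 0 \<and>
     (\<forall>u u' \<delta>. u \<le> u' \<and> \<delta> \<ge> 0 \<longrightarrow>
        F u u' \<delta> \<ge> G (u - \<epsilon>) (u' + \<epsilon>) (\<delta> + \<epsilon>) \<and>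
        G u u' \<delta> \<ge> F (u - \<epsilon>) (u' + \<epsilon>) (\<delta> + \<epsilon>))})"

end

theory Submission
  imports Defs
begin

definition edg :: "'a set set \<Rightarrow> ('a \<times> 'a) set" where
  "edg K = {(x, y). \<exists>\<sigma>\<in>K. x \<in> \<sigma> \<and> y \<in> \<sigma>}"

lemma betti_edg: "betti0_fun X d u u' \<delta> = card (X // ((edg (rips X (vee u u' d) \<delta>))\<^sup>*))"
  unfolding betti0_fun_def betti0_complex_def edg_def by simp

lemma vee_attain:
  fixes f :: "real \<Rightarrow> real"
  assumes "a \<le> b" "continuous_on UNIV f"
  shows "\<exists>s\<in>{a..b}. Inf (f ` {a..b}) = f s"
proof -
  have "continuous_on {a..b} f" using assms(2) continuous_on_subset by blast
  then obtain s where s: "s \<in> {a..b}" "\<forall>y\<in>{a..b}. f s \<le> f y"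
    using continuous_attains_inf[of "{a..b}" f] assms(1) by auto
  then have "Inf (f ` {a..b}) = f s" by (intro cInf_eq_minimum) auto
  then show ?thesis using s by blast
qed

lemma vee_mono:
  fixes f :: "real \<Rightarrow> real"
  assumes "a \<le> c" "e \<le> b" "c \<le> e" "\<forall>s. 0 \<le> f s"
  shows "Inf (f ` {a..b}) \<le> Inf (f ` {c..e})"
proof (rule cInf_superset_mono)
  show "f ` {c..e} \<noteq> {}" using assms by auto
  show "bdd_below (f ` {a..b})" using assms(4) by (auto intro: bdd_belowI[of _ 0])
  show "f ` {c..e} \<subseteq> f ` {a..b}" using assms by auto
qed

lemma vee_diag:
  assumes "a \<le> b" "\<forall>t. d t x x = 0"
  shows "vee a b d x x = 0"
proof -
  have "(\<lambda>s. d s x x) ` {a..b} = {0}" using assms by auto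
  then show ?thesis unfolding vee_def by simp
qed

lemma vee_sym: "(\<forall>t. d t x y = d t y x) \<Longrightarrow> vee a b d x y = vee a b d y x"
  unfolding vee_def by simp

lemma edgI:
  assumes "x \<in> Y" "y \<in> Y" "vee a b d x y \<le> r" "0 \<le> r" "a \<le> b"
    "\<forall>t. d t x x = 0" "\<forall>t. d t y y = 0" "\<forall>t. d t x y = d t y x"
  shows "(x, y) \<in> edg (rips Y (vee a b d) r)"
proof -
  have "{x, y} \<in> rips Y (vee a b d) r"
    using assms vee_diag[of a b d x] vee_diag[of a b d y] vee_sym[of d x y a b]
    unfolding rips_def by auto
  then show ?thesis unfolding edg_def by blast
qed

lemma edgD:
  assumes "(x, y) \<in> edg (rips X (vee a b d) r)"
  shows "x \<in> X \<and> y \<in> X \<and> vee a b d x y \<le> r"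
  using assms unfolding edg_def rips_def by auto

lemma dms_facts:
  assumes "is_DMS X d"
  shows "finite X" "\<And>t x y. x \<in> X \<Longrightarrow> y \<in> X \<Longrightarrow> 0 \<le> d t x y"
    "\<And>t x. x \<in> X \<Longrightarrow> d t x x = 0"
    "\<And>t x y. x \<in> X \<Longrightarrow> y \<in> X \<Longrightarrow> d t x y = d t y x"
    "\<And>x y. x \<in> X \<Longrightarrow> y \<in> X \<Longrightarrow> continuous_on UNIV (\<lambda>t. d t x y)"
  using assms unfolding is_DMS_def pseudometric_on_def by auto

lemma step:
  assumes DX: "is_DMS X dX" and DY: "is_DMS Y dY"
    and T: "is_eps_tripod \<epsilon> X dX Y dY Z" and e: "\<epsilon> \<ge> 0"
    and uu: "u \<le> u'" and dl: "\<delta> \<ge> 0"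
    and z: "z \<in> Z" "z' \<in> Z"
    and v: "vee u u' dX (fst z) (fst z') \<le> \<delta>"
  shows "(snd z, snd z') \<in> edg (rips Y (vee (u - 2*\<epsilon>) (u' + 2*\<epsilon>) dY) (\<delta> + 2*\<epsilon>))"
proof -
  have tri: "is_tripod X Y Z" using T unfolding is_eps_tripod_def by simp
  then have mem: "fst z \<in> X" "fst z' \<in> X" "snd z \<in> Y" "snd z' \<in> Y"
    using z unfolding is_tripod_def by auto
  obtain s where s: "s \<in> {u..u'}" "vee u u' dX (fst z) (fst z') = dX s (fst z) (fst z')"
    using vee_attain[OF uu dms_facts(5)[OF DX mem(1,2)]] unfolding vee_def by auto
  have "vee (s - \<epsilon>) (s + \<epsilon>) dY (snd z) (snd z') \<le> dX s (fst z) (fst z') + 2 * \<epsilon>"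
    using T z unfolding is_eps_tripod_def by blast
  moreover have "vee (u - 2*\<epsilon>) (u' + 2*\<epsilon>) dY (snd z) (snd z') \<le> vee (s - \<epsilon>) (s + \<epsilon>) dY (snd z) (snd z')"
    unfolding vee_def using s(1) e dms_facts(2)[OF DY mem(3,4)]
    by (intro vee_mono) auto
  ultimately have "vee (u - 2*\<epsilon>) (u' + 2*\<epsilon>) dY (snd z) (snd z') \<le> \<delta> + 2*\<epsilon>"
    using s v by linarith
  then show ?thesis
    using mem e dl uu dms_facts(3,4)[OF DY]
    by (intro edgI) auto
qed

lemma chain:
  assumes DX: "is_DMS X dX" and DY: "is_DMS Y dY"
    and T: "is_eps_tripod \<epsilon> X dX Y dY Z" and e: "\<epsilon> \<ge> 0"
    and uu: "u \<le> u'" and dl: "\<delta> \<ge> 0"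
    and z: "z \<in> Z"
    and r: "(fst z, b) \<in> (edg (rips X (vee u u' dX) \<delta>))\<^sup>*"
  shows "\<forall>z'\<in>Z. fst z' = b \<longrightarrow> (snd z, snd z') \<in> (edg (rips Y (vee (u - 2*\<epsilon>) (u' + 2*\<epsilon>) dY) (\<delta> + 2*\<epsilon>)))\<^sup>*"
  using r
proof (induction rule: rtrancl_induct)
  case base
  show ?case
  proof (intro ballI impI)
    fix z' assume z': "z' \<in> Z" "fst z' = fst z"
    have "fst z \<in> X" using T z unfolding is_eps_tripod_def is_tripod_def by auto
    then have "vee u u' dX (fst z) (fst z') \<le> \<delta>"
      using z' vee_diag[OF uu, of dX "fst z"] dms_facts(3)[OF DX] dl by auto
    then show "(snd z, snd z') \<in> (edg (rips Y (vee (u - 2*\<epsilon>) (u' + 2*\<epsilon>) dY) (\<delta> + 2*\<epsilon>)))\<^sup>*"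
      using step[OF DX DY T e uu dl z z'(1)] by blast
  qed
next
  case (step b c)
  show ?case
  proof (intro ballI impI)
    fix z' assume z': "z' \<in> Z" "fst z' = c"
    have bc: "b \<in> X" "vee u u' dX b c \<le> \<delta>" using edgD[OF step(2)] by auto
    have "fst ` Z = X" using T unfolding is_eps_tripod_def is_tripod_def by auto
    then obtain zb where zb: "zb \<in> Z" "fst zb = b" using bc(1) by force
    have 1: "(snd z, snd zb) \<in> (edg (rips Y (vee (u - 2*\<epsilon>) (u' + 2*\<epsilon>) dY) (\<delta> + 2*\<epsilon>)))\<^sup>*" using step(3) zb by blast
    have "(snd zb, snd z') \<in> edg (rips Y (vee (u - 2*\<epsilon>) (u' + 2*\<epsilon>) dY) (\<delta> + 2*\<epsilon>))"
      using Submission.step[OF DX DY T e uu dl zb(1) z'(1)] bc zb z' by auto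
    then show "(snd z, snd z') \<in> (edg (rips Y (vee (u - 2*\<epsilon>) (u' + 2*\<epsilon>) dY) (\<delta> + 2*\<epsilon>)))\<^sup>*" using 1 by (meson rtrancl.rtrancl_into_rtrancl)
  qed
qed

lemma sym_edg: "sym (edg K)"
  unfolding edg_def sym_def by blast

lemma rt_class_eq:
  assumes "sym R" "(a, b) \<in> R\<^sup>*"
  shows "R\<^sup>* `` {a} = R\<^sup>* `` {b}"
proof -
  have s: "sym (R\<^sup>*)" using sym_rtrancl[OF assms(1)] .
  have "(b, a) \<in> R\<^sup>*" using s assms(2) unfolding sym_def by blast
  then show ?thesis using assms(2) by (auto intro: rtrancl_trans)
qed

lemma betti_le:
  assumes DX: "is_DMS X dX" and DY: "is_DMS Y dY"
    and T: "is_eps_tripod \<epsilon> X dX Y dY Z" and e: "\<epsilon> \<ge> 0"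
    and uu: "u \<le> u'" and dl: "\<delta> \<ge> 0"
  shows "betti0_fun Y dY (u - 2*\<epsilon>) (u' + 2*\<epsilon>) (\<delta> + 2*\<epsilon>) \<le> betti0_fun X dX u u' \<delta>"
proof -
  define RX where "RX = (edg (rips X (vee u u' dX) \<delta>))\<^sup>*"
  define RY where "RY = (edg (rips Y (vee (u - 2*\<epsilon>) (u' + 2*\<epsilon>) dY) (\<delta> + 2*\<epsilon>)))\<^sup>*"
  have tri: "Z \<subseteq> X \<times> Y" "fst ` Z = X" "snd ` Z = Y"
    using T unfolding is_eps_tripod_def is_tripod_def by auto
  have key: "(snd z, snd z') \<in> RY" if "z \<in> Z" "z' \<in> Z" "(fst z, fst z') \<in> RX" for z z'
    using chain[OF DX DY T e uu dl that(1), of "fst z'"] that unfolding RX_def RY_def by blast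
  define g where "g C = RY `` {snd (SOME z. z \<in> Z \<and> fst z \<in> C)}" for C
  have fin: "finite (X // RX)" using dms_facts(1)[OF DX] unfolding quotient_def by simp
  have sub: "Y // RY \<subseteq> g ` (X // RX)"
  proof
    fix B assume "B \<in> Y // RY"
    then obtain y where y: "y \<in> Y" "B = RY `` {y}" unfolding quotient_def by blast
    then obtain z where z: "z \<in> Z" "snd z = y" using tri by force
    define C where "C = RX `` {fst z}"
    have zC: "z \<in> Z \<and> fst z \<in> C" using z unfolding C_def RX_def by auto
    define z' where "z' = (SOME z. z \<in> Z \<and> fst z \<in> C)"
    have z': "z' \<in> Z \<and> fst z' \<in> C" unfolding z'_def by (rule someI, rule zC)
    have "(snd z, snd z') \<in> RY" using key[of z z'] z z' unfolding C_def by auto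
    then have "RY `` {snd z'} = RY `` {y}"
      using rt_class_eq[OF sym_edg] z unfolding RY_def by metis
    then have "g C = B" unfolding g_def z'_def[symmetric] using y by simp
    moreover have "C \<in> X // RX" unfolding C_def using tri z
      by (auto intro: quotientI)
    ultimately show "B \<in> g ` (X // RX)" by blast
  qed
  have "card (Y // RY) \<le> card (g ` (X // RX))"
    using sub fin by (intro card_mono) auto
  also have "\<dots> \<le> card (X // RX)" using fin by (rule card_image_le)
  finally show ?thesis unfolding betti_edg RX_def RY_def .
qed

lemma swap_tripod:
  assumes "is_eps_tripod \<epsilon> X dX Y dY Z"
  shows "is_eps_tripod \<epsilon> Y dY X dX (prod.swap ` Z)"
  using assms unfolding is_eps_tripod_def is_tripod_def
  by (auto simp: image_image)

lemma dI_le: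
  assumes DX: "is_DMS X dX" and DY: "is_DMS Y dY"
    and T: "is_eps_tripod \<epsilon> X dX Y dY Z" and e: "\<epsilon> \<ge> 0"
  shows "d_I (betti0_fun X dX) (betti0_fun Y dY) \<le> ereal (2 * \<epsilon>)"
  unfolding d_I_def
proof (rule Inf_lower, rule imageI, safe)
  show "0 \<le> 2 * \<epsilon>" using e by simp
next
  fix u u' \<delta> :: real assume "u \<le> u'" "0 \<le> \<delta>"
  then show "betti0_fun Y dY (u - 2 * \<epsilon>) (u' + 2 * \<epsilon>) (\<delta> + 2 * \<epsilon>) \<le> betti0_fun X dX u u' \<delta>"
    "betti0_fun X dX (u - 2 * \<epsilon>) (u' + 2 * \<epsilon>) (\<delta> + 2 * \<epsilon>) \<le> betti0_fun Y dY u u' \<delta>"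
    using betti_le[OF DX DY T e] betti_le[OF DY DX swap_tripod[OF T] e] by auto
qed

lemma ereal_inf2:
  fixes c :: ereal
  assumes "\<And>x. x \<in> S \<Longrightarrow> c \<le> 2 * x"
  shows "c \<le> 2 * Inf S"
proof -
  have h: "c * ereal (1/2) \<le> x" if "x \<in> S" for x
  proof -
    have "c * ereal (1/2) \<le> 2 * x * ereal (1/2)"
      using assms[OF that] by (intro ereal_mult_right_mono) auto
    also have "\<dots> = x * (2 * ereal (1/2))" by (simp add: ac_simps)
    also have "\<dots> = x" by simp
    finally show ?thesis .
  qed
  have "c * ereal (1/2) \<le> Inf S" using h by (rule Inf_greatest)
  then have "2 * (c * ereal (1/2)) \<le> 2 * Inf S" by (intro ereal_mult_left_mono) auto
  moreover have "2 * (c * ereal (1/2)) = c" by (simp add: ac_simps)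
  ultimately show ?thesis by simp
qed

theorem theorem4p5:
  fixes X :: "'a set" and dX :: "real \<Rightarrow> 'a \<Rightarrow> 'a \<Rightarrow> real"
    and Y :: "'b set" and dY :: "real \<Rightarrow> 'b \<Rightarrow> 'b \<Rightarrow> real"
  assumes "is_DMS X dX" and "is_DMS Y dY"
  shows "d_I (betti0_fun X dX) (betti0_fun Y dY) \<le> 2 * d_dyn X dX Y dY"
  unfolding d_dyn_def
proof (rule ereal_inf2, safe)
  fix Z assume "is_tripod X Y Z"
  show "d_I (betti0_fun X dX) (betti0_fun Y dY) \<le> 2 * Inf (ereal ` {\<epsilon>. \<epsilon> \<ge> 0 \<and> is_eps_tripod \<epsilon> X dX Y dY Z})"
  proof (rule ereal_inf2, safe)
    fix \<epsilon> assume "0 \<le> \<epsilon>" "is_eps_tripod \<epsilon> X dX Y dY Z"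
    then show "d_I (betti0_fun X dX) (betti0_fun Y dY) \<le> 2 * ereal \<epsilon>"
      using dI_le[OF assms] by simp
  qed
qed

end
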